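(* Let $M$ be a smooth manifold of dimension $n$, let $\phi$ be a $1$-form on $M$ (not necessarily closed), let $t\in\mathbb{R}$, and let $F$ be a real-valued symmetric function ($F(a,b)=F(b,a)$) on $\{(a,b)\in\mathbb{Z}^2 \mid a+b\le n-1\}$. On $\mathfrak{h}=\bigoplus_{q=0}^{n}\Lambda^q T^*M$ define, for $\alpha\in\Lambda^aT^*M$ and $\beta\in\Lambda^bT^*M$, and extended bilinearly, $$[\alpha,\beta]_{t,\phi}=F(a,b)\,\alpha\wedge(t\phi)\wedge\beta .$$ Then $(\mathfrak{h},[\cdot,\cdot]_{t,\phi})$ is a Lie superalgebra.
   Context: $\Lambda^qT^*M$ denotes the space of smooth differential $q$-forms on $M$. In $\mathfrak{h}$ a $q$-form has degree $q'=-q-1$. A bracket on a $\mathbb{Z}$-graded space is a super bracket (making it a Lie superalgebra) if for homogeneous elements $P,Q,R$ of degrees $p',q',r'$: (super symmetry) $[P,Q]=-(-1)^{p'q'}[Q,P]$, and (super Jacobi identity) $[P,[Q,R]]=[[P,Q],R]+(-1)^{p'q'}[Q,[P,R]]$. *)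

theory Defs
  imports Complex_Main
begin

text \<open>An element of the exterior algebra of R^n (with basis e_0,...,e_{n-1}) is
represented by its coefficient function on index sets: alpha I is the coefficient of
e_I = e_{i_1} wedge ... wedge e_{i_k} (i_1 < ... < i_k, I = {i_1,...,i_k}).\<close>

type_synonym ext = "nat set \<Rightarrow> real"

definition ext_sign :: "nat set \<Rightarrow> nat set \<Rightarrow> real" where
  "ext_sign I J = (-1) ^ card {(i, j). i \<in> I \<and> j \<in> J \<and> j < i}"

text \<open>e_I wedge e_J = ext_sign I J * e_(I union J) if I, J disjoint, and 0 otherwise.\<close>
definition wedge :: "ext \<Rightarrow> ext \<Rightarrow> ext" where
  "wedge \<alpha> \<beta> = (\<lambda>K. if finite K
      then (\<Sum>I\<in>Pow K. ext_sign I (K - I) * \<alpha> I * \<beta> (K - I)) else 0)"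

definition ext_scale :: "real \<Rightarrow> ext \<Rightarrow> ext" where
  "ext_scale c \<alpha> = (\<lambda>I. c * \<alpha> I)"

definition ext_elem :: "nat \<Rightarrow> ext \<Rightarrow> bool" where
  "ext_elem n \<alpha> \<longleftrightarrow> (\<forall>I. \<alpha> I \<noteq> 0 \<longrightarrow> I \<subseteq> {..<n})"

definition ext_hom :: "nat \<Rightarrow> nat \<Rightarrow> ext \<Rightarrow> bool" where
  "ext_hom n q \<alpha> \<longleftrightarrow> (\<forall>I. \<alpha> I \<noteq> 0 \<longrightarrow> I \<subseteq> {..<n} \<and> card I = q)"

text \<open>A (possibly inhomogeneous) differential form on M assigns to each point x of M an
element of the exterior algebra of the cotangent space at x, identified with R^n.\<close>

type_synonym 'p form = "'p \<Rightarrow> ext"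

definition forms :: "nat \<Rightarrow> 'p form set" where
  "forms n = {P. \<forall>x. ext_elem n (P x)}"

definition is_qform :: "nat \<Rightarrow> nat \<Rightarrow> 'p form \<Rightarrow> bool" where
  "is_qform n q P \<longleftrightarrow> (\<forall>x. ext_hom n q (P x))"

definition form_add :: "'p form \<Rightarrow> 'p form \<Rightarrow> 'p form" where
  "form_add P Q = (\<lambda>x I. P x I + Q x I)"

definition form_smul :: "real \<Rightarrow> 'p form \<Rightarrow> 'p form" where
  "form_smul c P = (\<lambda>x I. c * P x I)"

definition form_proj :: "nat \<Rightarrow> 'p form \<Rightarrow> 'p form" where
  "form_proj q P = (\<lambda>x I. if card I = q then P x I else 0)"

definition h_grade :: "nat \<Rightarrow> int \<Rightarrow> 'p form set" where
  "h_grade n k = {P \<in> forms n. \<exists>q. k = - int q - 1 \<and> is_qform n q P}"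

definition bracket :: "nat \<Rightarrow> (int \<Rightarrow> int \<Rightarrow> real) \<Rightarrow> real \<Rightarrow> 'p form \<Rightarrow> 'p form \<Rightarrow> 'p form \<Rightarrow> 'p form" where
  "bracket n F t \<phi> P Q = (\<lambda>x K. \<Sum>a\<in>{0..n}. \<Sum>b\<in>{0..n}.
      ext_scale (F (int a) (int b))
        (wedge (wedge (form_proj a P x) (ext_scale t (\<phi> x))) (form_proj b Q x)) K)"

definition super_sign :: "int \<Rightarrow> int \<Rightarrow> real" where
  "super_sign p q = (-1) ^ nat \<bar>p * q\<bar>"

definition lie_superalgebra ::
  "'v set \<Rightarrow> (int \<Rightarrow> 'v set) \<Rightarrow> ('v \<Rightarrow> 'v \<Rightarrow> 'v) \<Rightarrow> ('v \<Rightarrow> 'v \<Rightarrow> 'v) \<Rightarrow> (real \<Rightarrow> 'v \<Rightarrow> 'v) \<Rightarrow> bool" where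
  "lie_superalgebra V grade br add smul \<longleftrightarrow>
     (\<forall>P\<in>V. \<forall>Q\<in>V. add P Q \<in> V \<and> br P Q \<in> V) \<and>
     (\<forall>c. \<forall>P\<in>V. smul c P \<in> V) \<and>
     (\<forall>k. grade k \<subseteq> V) \<and>
     (\<forall>P\<in>V. \<forall>Q\<in>V. \<forall>R\<in>V. \<forall>c.
        br (add P Q) R = add (br P R) (br Q R) \<and>
        br R (add P Q) = add (br R P) (br R Q) \<and>
        br (smul c P) Q = smul c (br P Q) \<and>
        br P (smul c Q) = smul c (br P Q)) \<and>
     (\<forall>p q P Q. P \<in> grade p \<longrightarrow> Q \<in> grade q \<longrightarrow> br P Q \<in> grade (p + q)) \<and>
     (\<forall>p q P Q. P \<in> grade p \<longrightarrow> Q \<in> grade q \<longrightarrow>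
        br P Q = smul (- super_sign p q) (br Q P)) \<and>
     (\<forall>p q r P Q R. P \<in> grade p \<longrightarrow> Q \<in> grade q \<longrightarrow> R \<in> grade r \<longrightarrow>
        br P (br Q R) = add (br (br P Q) R) (smul (super_sign p q) (br Q (br P R))))"

end

theory Submission
  imports Defs
begin

definition inv_cnt :: "nat set \<Rightarrow> nat set \<Rightarrow> nat" where
  "inv_cnt I J = card {(i, j). i \<in> I \<and> j \<in> J \<and> j < i}"

lemma ext_sign_inv: "ext_sign I J = (-1) ^ inv_cnt I J"
  by (simp add: ext_sign_def inv_cnt_def)

lemma inv_Un_left:
  assumes "A \<inter> B = {}" "finite A" "finite B" "finite C"
  shows "inv_cnt (A \<union> B) C = inv_cnt A C + inv_cnt B C"
proof -
  have e: "{(i, j). i \<in> A \<union> B \<and> j \<in> C \<and> j < i} =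
     {(i, j). i \<in> A \<and> j \<in> C \<and> j < i} \<union> {(i, j). i \<in> B \<and> j \<in> C \<and> j < i}" by auto
  have f1: "finite {(i, j). i \<in> A \<and> j \<in> C \<and> j < i}"
    by (rule finite_subset[of _ "A \<times> C"]) (use assms in auto)
  have f2: "finite {(i, j). i \<in> B \<and> j \<in> C \<and> j < i}"
    by (rule finite_subset[of _ "B \<times> C"]) (use assms in auto)
  show ?thesis unfolding inv_cnt_def e
    by (rule card_Un_disjoint[OF f1 f2]) (use assms in auto)
qed

lemma inv_Un_right:
  assumes "B \<inter> C = {}" "finite A" "finite B" "finite C"
  shows "inv_cnt A (B \<union> C) = inv_cnt A B + inv_cnt A C"
proof -
  have e: "{(i, j). i \<in> A \<and> j \<in> B \<union> C \<and> j < i} =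
     {(i, j). i \<in> A \<and> j \<in> B \<and> j < i} \<union> {(i, j). i \<in> A \<and> j \<in> C \<and> j < i}" by auto
  have f1: "finite {(i, j). i \<in> A \<and> j \<in> B \<and> j < i}"
    by (rule finite_subset[of _ "A \<times> B"]) (use assms in auto)
  have f2: "finite {(i, j). i \<in> A \<and> j \<in> C \<and> j < i}"
    by (rule finite_subset[of _ "A \<times> C"]) (use assms in auto)
  show ?thesis unfolding inv_cnt_def e
    by (rule card_Un_disjoint[OF f1 f2]) (use assms in auto)
qed

lemma sign_assoc:
  assumes "A \<inter> B = {}" "A \<inter> C = {}" "B \<inter> C = {}" "finite A" "finite B" "finite C"
  shows "ext_sign (A \<union> B) C * ext_sign A B = ext_sign A (B \<union> C) * ext_sign B C"
  unfolding ext_sign_inv using assms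
  by (simp add: inv_Un_left inv_Un_right power_add[symmetric] algebra_simps)

lemma inv_swap:
  assumes "I \<inter> J = {}" "finite I" "finite J"
  shows "inv_cnt I J + inv_cnt J I = card I * card J"
proof -
  have s2: "inv_cnt J I = card {(i, j). i \<in> I \<and> j \<in> J \<and> i < j}"
    unfolding inv_cnt_def
    by (rule bij_betw_same_card[of prod.swap]) (auto simp: bij_betw_def inj_on_def image_def)
  have e: "I \<times> J = {(i, j). i \<in> I \<and> j \<in> J \<and> j < i} \<union> {(i, j). i \<in> I \<and> j \<in> J \<and> i < j}"
    using assms(1) by (auto dest: nat_neq_iff[THEN iffD1])
  have f1: "finite {(i, j). i \<in> I \<and> j \<in> J \<and> j < i}"
    by (rule finite_subset[of _ "I \<times> J"]) (use assms in auto)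
  have f2: "finite {(i, j). i \<in> I \<and> j \<in> J \<and> i < j}"
    by (rule finite_subset[of _ "I \<times> J"]) (use assms in auto)
  have "card (I \<times> J) = inv_cnt I J + card {(i, j). i \<in> I \<and> j \<in> J \<and> i < j}"
    unfolding e inv_cnt_def by (rule card_Un_disjoint[OF f1 f2]) auto
  then show ?thesis using s2 by (simp add: card_cartesian_product)
qed

lemma sign_comm:
  assumes "I \<inter> J = {}" "finite I" "finite J"
  shows "ext_sign I J = (-1) ^ (card I * card J) * ext_sign J I"
proof -
  have "(-1::real) ^ (card I * card J) * ext_sign J I = (-1) ^ (inv_cnt I J + inv_cnt J I) * (-1) ^ inv_cnt J I"
    using inv_swap[OF assms] by (simp add: ext_sign_inv)
  also have "\<dots> = (-1) ^ inv_cnt I J * ((-1) ^ inv_cnt J I * (-1) ^ inv_cnt J I)"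
    by (simp add: power_add algebra_simps)
  also have "\<dots> = (-1) ^ inv_cnt I J"
    by (simp add: power_add[symmetric] flip: mult_2)
  finally show ?thesis by (simp add: ext_sign_inv)
qed

lemma wedge_fin: "finite K \<Longrightarrow> wedge \<alpha> \<beta> K = (\<Sum>I\<in>Pow K. ext_sign I (K - I) * \<alpha> I * \<beta> (K - I))"
  by (simp add: wedge_def)

lemma wedge_inf: "infinite K \<Longrightarrow> wedge \<alpha> \<beta> K = 0"
  by (simp add: wedge_def)

lemma wedge_assoc: "wedge (wedge \<alpha> \<beta>) \<gamma> = wedge \<alpha> (wedge \<beta> \<gamma>)"
proof (rule ext)
  fix K show "wedge (wedge \<alpha> \<beta>) \<gamma> K = wedge \<alpha> (wedge \<beta> \<gamma>) K"
  proof (cases "finite K")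
    case False thus ?thesis by (simp add: wedge_def)
  next
    case True
    have L: "wedge (wedge \<alpha> \<beta>) \<gamma> K = (\<Sum>(I,A)\<in>Sigma (Pow K) Pow.
        ext_sign I (K-I) * ext_sign A (I-A) * \<alpha> A * \<beta> (I-A) * \<gamma> (K-I))"
    proof -
      have "wedge (wedge \<alpha> \<beta>) \<gamma> K = (\<Sum>I\<in>Pow K. \<Sum>A\<in>Pow I.
        ext_sign I (K-I) * ext_sign A (I-A) * \<alpha> A * \<beta> (I-A) * \<gamma> (K-I))"
        unfolding wedge_fin[OF True]
      proof (rule sum.cong[OF refl])
        fix I assume "I \<in> Pow K"
        then have "finite I" using True finite_subset by auto
        then show "ext_sign I (K - I) * wedge \<alpha> \<beta> I * \<gamma> (K - I) = (\<Sum>A\<in>Pow I.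
          ext_sign I (K-I) * ext_sign A (I-A) * \<alpha> A * \<beta> (I-A) * \<gamma> (K-I))"
          by (simp add: wedge_fin sum_distrib_left sum_distrib_right algebra_simps)
      qed
      also have "\<dots> = (\<Sum>(I,A)\<in>Sigma (Pow K) Pow.
        ext_sign I (K-I) * ext_sign A (I-A) * \<alpha> A * \<beta> (I-A) * \<gamma> (K-I))"
        by (rule sum.Sigma) (use True finite_subset in auto)
      finally show ?thesis .
    qed
    have R: "wedge \<alpha> (wedge \<beta> \<gamma>) K = (\<Sum>(A,B)\<in>Sigma (Pow K) (\<lambda>A. Pow (K - A)).
        ext_sign A (K-A) * ext_sign B (K-A-B) * \<alpha> A * \<beta> B * \<gamma> (K-A-B))"
    proof -
      have "wedge \<alpha> (wedge \<beta> \<gamma>) K = (\<Sum>A\<in>Pow K. \<Sum>B\<in>Pow (K-A).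
        ext_sign A (K-A) * ext_sign B (K-A-B) * \<alpha> A * \<beta> B * \<gamma> (K-A-B))"
        unfolding wedge_fin[OF True]
      proof (rule sum.cong[OF refl])
        fix A assume "A \<in> Pow K"
        have "finite (K - A)" using True by auto
        then show "ext_sign A (K - A) * \<alpha> A * wedge \<beta> \<gamma> (K - A) = (\<Sum>B\<in>Pow (K-A).
          ext_sign A (K-A) * ext_sign B (K-A-B) * \<alpha> A * \<beta> B * \<gamma> (K-A-B))"
          by (simp add: wedge_fin sum_distrib_left sum_distrib_right algebra_simps)
      qed
      also have "\<dots> = (\<Sum>(A,B)\<in>Sigma (Pow K) (\<lambda>A. Pow (K - A)).
        ext_sign A (K-A) * ext_sign B (K-A-B) * \<alpha> A * \<beta> B * \<gamma> (K-A-B))"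
        by (rule sum.Sigma) (use True finite_subset in auto)
      finally show ?thesis .
    qed
    show ?thesis unfolding L R
    proof (rule sum.reindex_bij_witness[where j = "\<lambda>(I,A). (A, I - A)" and i = "\<lambda>(A,B). (A \<union> B, A)"])
      fix a assume "a \<in> Sigma (Pow K) Pow"
      then obtain I A where a: "a = (I, A)" "I \<subseteq> K" "A \<subseteq> I" by auto
      have fA: "finite A" "finite (I - A)" "finite (K - I)" using a True by (auto intro: finite_subset)
      have e1: "K - A - (I - A) = K - I" "K - A = (I - A) \<union> (K - I)" using a by auto
      have "ext_sign A ((I - A) \<union> (K - I)) * ext_sign (I - A) (K - I) =
            ext_sign (A \<union> (I - A)) (K - I) * ext_sign A (I - A)"
        by (rule sign_assoc[symmetric]) (use fA a in auto)
      moreover have "A \<union> (I - A) = I" using a by auto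
      moreover have "ext_sign A (K - A) * ext_sign (I - A) (K - A - (I - A)) = ext_sign A ((I - A) \<union> (K - I)) * ext_sign (I - A) (K - I)"
        by (subst e1(1)) (subst e1(2), rule refl)
      ultimately have "ext_sign A (K - A) * ext_sign (I - A) (K - A - (I - A)) = ext_sign I (K - I) * ext_sign A (I - A)"
        by simp
      then show "(case (case a of (I, A) \<Rightarrow> (A, I - A)) of
          (A, B) \<Rightarrow> ext_sign A (K - A) * ext_sign B (K - A - B) * \<alpha> A * \<beta> B * \<gamma> (K - A - B)) =
         (case a of (I, A) \<Rightarrow> ext_sign I (K - I) * ext_sign A (I - A) * \<alpha> A * \<beta> (I - A) * \<gamma> (K - I))"
        using a e1 by (simp add: algebra_simps)
    qed auto
  qed
qed

definition deg :: "nat \<Rightarrow> ext \<Rightarrow> bool" where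
  "deg a \<alpha> \<longleftrightarrow> (\<forall>I. \<alpha> I \<noteq> 0 \<longrightarrow> card I = a)"

definition supp :: "nat \<Rightarrow> ext \<Rightarrow> bool" where
  "supp n \<alpha> \<longleftrightarrow> (\<forall>I. \<alpha> I \<noteq> 0 \<longrightarrow> I \<subseteq> {..<n})"

lemma wedge_comm:
  assumes "deg a \<alpha>" "deg b \<beta>"
  shows "wedge \<alpha> \<beta> = (\<lambda>K. (-1) ^ (a * b) * wedge \<beta> \<alpha> K)"
proof (rule ext)
  fix K show "wedge \<alpha> \<beta> K = (-1) ^ (a * b) * wedge \<beta> \<alpha> K"
  proof (cases "finite K")
    case False thus ?thesis by (simp add: wedge_def)
  next
    case True
    show ?thesis unfolding wedge_fin[OF True] sum_distrib_left
    proof (rule sum.reindex_bij_witness[where i = "\<lambda>J. K - J" and j = "\<lambda>I. K - I"])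
      fix I assume I: "I \<in> Pow K"
      have kk: "K - (K - I) = I" using I by auto
      show "(-1) ^ (a * b) * (ext_sign (K - I) (K - (K - I)) * \<beta> (K - I) * \<alpha> (K - (K - I))) =
          ext_sign I (K - I) * \<alpha> I * \<beta> (K - I)"
      proof (cases "\<alpha> I = 0 \<or> \<beta> (K - I) = 0")
        case True then show ?thesis by (auto simp: kk)
      next
        case False
        then have c: "card I = a" "card (K - I) = b" using assms by (auto simp: deg_def)
        have fI: "finite I" using I True by (auto intro: finite_subset)
        have "ext_sign I (K - I) = (-1) ^ (a * b) * ext_sign (K - I) I"
          using sign_comm[of I "K - I"] fI True c by auto
        then show ?thesis by (simp add: kk)
      qed
    qed auto
  qed
qed

lemma wedge_deg:
  assumes "deg a \<alpha>" "deg b \<beta>"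
  shows "deg (a + b) (wedge \<alpha> \<beta>)"
  unfolding deg_def
proof (intro allI impI)
  fix K assume nz: "wedge \<alpha> \<beta> K \<noteq> 0"
  then have fK: "finite K" by (auto simp: wedge_def split: if_splits)
  from nz obtain I where I: "I \<subseteq> K" "\<alpha> I \<noteq> 0" "\<beta> (K - I) \<noteq> 0"
    unfolding wedge_fin[OF fK] by (metis (no_types, lifting) PowD mult_eq_0_iff sum.neutral)
  then have "card I = a" "card (K - I) = b" using assms by (auto simp: deg_def)
  moreover have "card K = card I + card (K - I)"
    using I(1) fK by (metis card_Diff_subset finite_subset card_mono le_add_diff_inverse)
  ultimately show "card K = a + b" by simp
qed

lemma wedge_supp:
  assumes "supp n \<alpha>" "supp n \<beta>"
  shows "supp n (wedge \<alpha> \<beta>)"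
  unfolding supp_def
proof (intro allI impI)
  fix K assume nz: "wedge \<alpha> \<beta> K \<noteq> 0"
  then have fK: "finite K" by (auto simp: wedge_def split: if_splits)
  from nz obtain I where I: "I \<subseteq> K" "\<alpha> I \<noteq> 0" "\<beta> (K - I) \<noteq> 0"
    unfolding wedge_fin[OF fK] by (metis (no_types, lifting) PowD mult_eq_0_iff sum.neutral)
  then have "I \<subseteq> {..<n}" "K - I \<subseteq> {..<n}" using assms by (auto simp: supp_def)
  then show "K \<subseteq> {..<n}" by auto
qed

lemma wedge_self_zero:
  assumes "deg 1 \<psi>"
  shows "wedge \<psi> \<psi> = (\<lambda>K. 0)"
  using fun_cong[OF wedge_comm[OF assms assms]] by (auto simp: fun_eq_iff)

lemma wedge_zero_left[simp]: "wedge (\<lambda>I. 0) \<beta> = (\<lambda>K. 0)"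
  by (simp add: wedge_def fun_eq_iff)
lemma wedge_zero_right[simp]: "wedge \<alpha> (\<lambda>I. 0) = (\<lambda>K. 0)"
  by (simp add: wedge_def fun_eq_iff)
lemma wedge_add_left: "wedge (\<lambda>I. \<alpha> I + \<beta> I) \<gamma> = (\<lambda>K. wedge \<alpha> \<gamma> K + wedge \<beta> \<gamma> K)"
  by (simp add: wedge_def fun_eq_iff sum.distrib algebra_simps)
lemma wedge_add_right: "wedge \<gamma> (\<lambda>I. \<alpha> I + \<beta> I) = (\<lambda>K. wedge \<gamma> \<alpha> K + wedge \<gamma> \<beta> K)"
  by (simp add: wedge_def fun_eq_iff sum.distrib algebra_simps)
lemma wedge_scale_left: "wedge (\<lambda>I. c * \<alpha> I) \<gamma> = (\<lambda>K. c * wedge \<alpha> \<gamma> K)"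
  by (simp add: wedge_def fun_eq_iff sum_distrib_left algebra_simps)
lemma wedge_scale_right: "wedge \<gamma> (\<lambda>I. c * \<alpha> I) = (\<lambda>K. c * wedge \<gamma> \<alpha> K)"
  by (simp add: wedge_def fun_eq_iff sum_distrib_left algebra_simps)

lemma proj_add: "form_proj a (form_add P Q) x = (\<lambda>I. form_proj a P x I + form_proj a Q x I)"
  by (auto simp: form_proj_def form_add_def fun_eq_iff)
lemma proj_smul: "form_proj a (form_smul c P) x = (\<lambda>I. c * form_proj a P x I)"
  by (auto simp: form_proj_def form_smul_def fun_eq_iff)

lemma br_add_left: "bracket n F t \<phi> (form_add P Q) R = form_add (bracket n F t \<phi> P R) (bracket n F t \<phi> Q R)"
  unfolding bracket_def proj_add
  by (simp add: wedge_add_left ext_scale_def form_add_def sum.distrib algebra_simps)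
lemma br_add_right: "bracket n F t \<phi> R (form_add P Q) = form_add (bracket n F t \<phi> R P) (bracket n F t \<phi> R Q)"
  unfolding bracket_def proj_add
  by (simp add: wedge_add_right ext_scale_def form_add_def sum.distrib algebra_simps)
lemma br_smul_left: "bracket n F t \<phi> (form_smul c P) Q = form_smul c (bracket n F t \<phi> P Q)"
  unfolding bracket_def proj_smul
  by (simp add: wedge_scale_left ext_scale_def form_smul_def sum_distrib_left algebra_simps)
lemma br_smul_right: "bracket n F t \<phi> P (form_smul c Q) = form_smul c (bracket n F t \<phi> P Q)"
  unfolding bracket_def proj_smul
  by (simp add: wedge_scale_right ext_scale_def form_smul_def sum_distrib_left algebra_simps)

lemma ext_hom_iff: "ext_hom n q \<alpha> \<longleftrightarrow> supp n \<alpha> \<and> deg q \<alpha>"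
  by (auto simp: ext_hom_def supp_def deg_def)

lemma supp_card: "supp n \<alpha> \<Longrightarrow> \<alpha> I \<noteq> 0 \<Longrightarrow> card I \<le> n"
  unfolding supp_def by (metis card_lessThan card_mono finite_lessThan)

lemma hom_zero: "supp n \<alpha> \<Longrightarrow> deg a \<alpha> \<Longrightarrow> n < a \<Longrightarrow> \<alpha> = (\<lambda>_. 0)"
  by (rule ext, rule ccontr) (use supp_card in \<open>fastforce simp: deg_def\<close>)

lemma proj_hom: "is_qform n a P \<Longrightarrow> form_proj a' P x = (if a' = a then P x else (\<lambda>_. 0))"
  unfolding is_qform_def ext_hom_def form_proj_def by (auto simp: fun_eq_iff)

lemma br_hom:
  assumes P: "is_qform n a P" and Q: "is_qform n b Q"
  shows "bracket n F t \<phi> P Q = (\<lambda>x K. F a b * wedge (wedge (P x) (ext_scale t (\<phi> x))) (Q x) K)"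
proof (intro ext)
  fix x K
  show "bracket n F t \<phi> P Q x K = F a b * wedge (wedge (P x) (ext_scale t (\<phi> x))) (Q x) K"
  proof (cases "a \<le> n \<and> b \<le> n")
    case True
    have e: "ext_scale (F (int a') (int b')) (wedge (wedge (if a' = a then P x else (\<lambda>_. 0)) (ext_scale t (\<phi> x)))
        (if b' = b then Q x else (\<lambda>_. 0))) K =
        (if a' = a then (if b' = b then F a b * wedge (wedge (P x) (ext_scale t (\<phi> x))) (Q x) K else 0) else 0)" for a' b'
      by (auto simp: ext_scale_def)
    have e2: "(\<Sum>b'\<in>{0..n}. if a' = a then (if b' = b then X else 0) else (0::real)) = (if a' = a then X else 0)" for a' X
      using True by (cases "a' = a") auto
    show ?thesis unfolding bracket_def proj_hom[OF P] proj_hom[OF Q] e e2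
      using True by simp
  next
    case False
    then have "P x = (\<lambda>_. 0) \<or> Q x = (\<lambda>_. 0)"
      using hom_zero P Q unfolding is_qform_def ext_hom_iff by (meson not_le)
    then have z: "form_proj a' P x = (\<lambda>_. 0) \<or> form_proj b' Q x = (\<lambda>_. 0)" for a' b'
      by (auto simp: form_proj_def fun_eq_iff)
    have "bracket n F t \<phi> P Q x K = 0"
      unfolding bracket_def
    proof (rule sum.neutral, rule ballI, rule sum.neutral, rule ballI)
      fix a' b'
      show "ext_scale (F (int a') (int b')) (wedge (wedge (form_proj a' P x) (ext_scale t (\<phi> x))) (form_proj b' Q x)) K = 0"
        using z[of a' b'] by (elim disjE) (simp_all add: ext_scale_def)
    qed
    moreover have "wedge (wedge (P x) (ext_scale t (\<phi> x))) (Q x) K = 0"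
      using \<open>P x = (\<lambda>_. 0) \<or> Q x = (\<lambda>_. 0)\<close> by auto
    ultimately show ?thesis by simp
  qed
qed

lemma supp_scale: "supp n \<alpha> \<Longrightarrow> supp n (\<lambda>K. c * \<alpha> K)"
  by (simp add: supp_def)
lemma deg_scale: "deg d \<alpha> \<Longrightarrow> deg d (\<lambda>K. c * \<alpha> K)"
  by (simp add: deg_def)

lemma jac0:
  assumes "deg b \<beta>" "deg 1 \<psi>"
  shows "wedge (wedge \<alpha> \<psi>) (wedge (wedge \<beta> \<psi>) \<gamma>) = (\<lambda>K. 0)"
proof -
  have "wedge \<psi> (wedge \<beta> \<psi>) = wedge (wedge \<psi> \<beta>) \<psi>" by (simp add: wedge_assoc)
  also have "\<dots> = (\<lambda>K. (-1) ^ (1 * b) * wedge (wedge \<beta> \<psi>) \<psi> K)"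
    by (simp add: wedge_comm[OF assms(2,1)] wedge_scale_left)
  also have "\<dots> = (\<lambda>K. 0)" by (simp add: wedge_assoc wedge_self_zero[OF assms(2)])
  finally have z: "wedge \<psi> (wedge \<beta> \<psi>) = (\<lambda>K. 0)" .
  have "wedge (wedge \<alpha> \<psi>) (wedge (wedge \<beta> \<psi>) \<gamma>) = wedge \<alpha> (wedge (wedge \<psi> (wedge \<beta> \<psi>)) \<gamma>)"
    by (simp add: wedge_assoc)
  then show ?thesis by (simp add: z)
qed

lemma jac1:
  assumes "deg b \<beta>" "deg 1 \<psi>"
  shows "wedge (wedge (wedge (wedge \<alpha> \<psi>) \<beta>) \<psi>) \<gamma> = (\<lambda>K. 0)"
proof -
  have "wedge \<psi> (wedge \<beta> \<psi>) = wedge (wedge \<psi> \<beta>) \<psi>" by (simp add: wedge_assoc)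
  also have "\<dots> = (\<lambda>K. (-1) ^ (1 * b) * wedge (wedge \<beta> \<psi>) \<psi> K)"
    by (simp add: wedge_comm[OF assms(2,1)] wedge_scale_left)
  also have "\<dots> = (\<lambda>K. 0)" by (simp add: wedge_assoc wedge_self_zero[OF assms(2)])
  finally have z: "wedge \<psi> (wedge \<beta> \<psi>) = (\<lambda>K. 0)" .
  have "wedge (wedge (wedge (wedge \<alpha> \<psi>) \<beta>) \<psi>) \<gamma> = wedge (wedge \<alpha> (wedge \<psi> (wedge \<beta> \<psi>))) \<gamma>"
    by (simp add: wedge_assoc)
  then show ?thesis by (simp add: z)
qed

lemma swap_W:
  assumes "deg a \<alpha>" "deg b \<beta>" "deg 1 \<psi>"
  shows "wedge (wedge \<beta> \<psi>) \<alpha> = (\<lambda>K. (-1) ^ ((b + 1) * a) * (-1) ^ b * wedge (wedge \<alpha> \<psi>) \<beta> K)"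
proof -
  have "wedge (wedge \<beta> \<psi>) \<alpha> = (\<lambda>K. (-1) ^ ((b + 1) * a) * wedge \<alpha> (wedge \<beta> \<psi>) K)"
    by (rule wedge_comm[OF wedge_deg[OF assms(2,3)] assms(1)])
  also have "wedge \<alpha> (wedge \<beta> \<psi>) = wedge \<alpha> (\<lambda>K. (-1) ^ (b * 1) * wedge \<psi> \<beta> K)"
    by (simp only: wedge_comm[OF assms(2,3)])
  finally show ?thesis by (simp add: wedge_scale_right wedge_assoc mult.assoc)
qed

lemma sign_arith: "(-1::real) ^ ((a + 1) * (b + 1)) * ((-1) ^ ((b + 1) * a) * (-1) ^ b) = -1"
proof -
  have e: "(a + 1) * (b + 1) + ((b + 1) * a + b) = Suc (2 * (a * (b + 1) + b))"
    by (simp add: algebra_simps)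
  show ?thesis unfolding power_add[symmetric] e by simp
qed

lemma super_sign_eq: "super_sign (- int a - 1) (- int b - 1) = (-1) ^ ((a + 1) * (b + 1))"
proof -
  have "(- int a - 1) * (- int b - 1) = int ((a + 1) * (b + 1))" by (simp add: algebra_simps)
  then show ?thesis unfolding super_sign_def by (simp only: abs_of_nat nat_int)
qed

theorem mainTheorem1:
  fixes n :: nat and \<phi> :: "'p form" and t :: real and F :: "int \<Rightarrow> int \<Rightarrow> real"
  assumes phi_one_form: "is_qform n 1 \<phi>"
    and F_sym: "\<And>a b. a + b \<le> int n - 1 \<Longrightarrow> F a b = F b a"
  shows "lie_superalgebra (forms n) (h_grade n) (bracket n F t \<phi>) form_add form_smul"
proof -
  let ?br = "bracket n F t \<phi>"
  have psi_deg: "deg 1 (ext_scale t (\<phi> x))" for x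
    using phi_one_form by (auto simp: is_qform_def ext_hom_iff ext_scale_def intro: deg_scale)
  have psi_supp: "supp n (ext_scale t (\<phi> x))" for x
    using phi_one_form by (auto simp: is_qform_def ext_hom_iff ext_scale_def intro: supp_scale)
  have forms_iff: "P \<in> forms n \<longleftrightarrow> (\<forall>x. supp n (P x))" for P :: "'p form"
    by (simp add: forms_def ext_elem_def supp_def)
  have grade_E: "\<exists>a. p = - int a - 1 \<and> is_qform n a P \<and> P \<in> forms n" if "P \<in> h_grade n p" for P p
    using that by (auto simp: h_grade_def)
  have qform_forms: "is_qform n a P \<Longrightarrow> P \<in> forms n" for a and P :: "'p form"
    by (auto simp: forms_iff is_qform_def ext_hom_iff)
  have W_hom: "is_qform n (a + b + 1) (?br P Q)" if P: "is_qform n a P" and Q: "is_qform n b Q" for a b P Q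
  proof -
    have "supp n (P x) \<and> deg a (P x)" "supp n (Q x) \<and> deg b (Q x)" for x
      using P Q by (auto simp: is_qform_def ext_hom_iff)
    then have "supp n (?br P Q x) \<and> deg (a + 1 + b) (?br P Q x)" for x
      unfolding br_hom[OF P Q]
      by (intro conjI supp_scale deg_scale wedge_supp wedge_deg psi_supp psi_deg) auto
    then show ?thesis by (auto simp: is_qform_def ext_hom_iff add.commute add.left_commute)
  qed
  have br_forms: "?br P Q \<in> forms n" if "P \<in> forms n" "Q \<in> forms n" for P Q
  proof -
    have sP: "supp n (form_proj a P x)" "supp n (form_proj a Q x)" for a x
      using that by (auto simp: forms_iff supp_def form_proj_def)
    show ?thesis unfolding forms_iff supp_def
    proof (intro allI impI, rule ccontr)
      fix x I assume nz: "?br P Q x I \<noteq> 0" and ns: "\<not> I \<subseteq> {..<n}"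
      have "?br P Q x I = 0" unfolding bracket_def
      proof (rule sum.neutral, rule ballI, rule sum.neutral, rule ballI)
        fix a b
        have "supp n (wedge (wedge (form_proj a P x) (ext_scale t (\<phi> x))) (form_proj b Q x))"
          by (intro wedge_supp sP psi_supp)
        then show "ext_scale (F (int a) (int b)) (wedge (wedge (form_proj a P x) (ext_scale t (\<phi> x))) (form_proj b Q x)) I = 0"
          using ns by (auto simp: supp_def ext_scale_def)
      qed
      with nz show False by simp
    qed
  qed
  show ?thesis unfolding lie_superalgebra_def
  proof (intro conjI allI ballI impI)
    fix P Q :: "'p form" assume "P \<in> forms n" "Q \<in> forms n"
    then show "form_add P Q \<in> forms n"
      unfolding forms_def ext_elem_def form_add_def mem_Collect_eq
    proof (intro allI impI)
      fix x I assume h: "\<forall>x I. P x I \<noteq> 0 \<longrightarrow> I \<subseteq> {..<n}" "\<forall>x I. Q x I \<noteq> 0 \<longrightarrow> I \<subseteq> {..<n}"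
        and nz: "P x I + Q x I \<noteq> 0"
      then have "P x I \<noteq> 0 \<or> Q x I \<noteq> 0" by auto
      then show "I \<subseteq> {..<n}" using h by blast
    qed
    show "?br P Q \<in> forms n" by (rule br_forms) fact+
  next
    fix c and P :: "'p form" assume "P \<in> forms n"
    then show "form_smul c P \<in> forms n"
      by (auto simp: forms_def ext_elem_def form_smul_def)
  next
    fix k show "h_grade n k \<subseteq> forms n" by (auto simp: h_grade_def)
  next
    fix P Q R :: "'p form" and c :: real
    show "?br (form_add P Q) R = form_add (?br P R) (?br Q R)" by (rule br_add_left)
    show "?br R (form_add P Q) = form_add (?br R P) (?br R Q)" by (rule br_add_right)
    show "?br (form_smul c P) Q = form_smul c (?br P Q)" by (rule br_smul_left)
    show "?br P (form_smul c Q) = form_smul c (?br P Q)" by (rule br_smul_right)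
  next
    fix p q and P Q :: "'p form" assume "P \<in> h_grade n p" "Q \<in> h_grade n q"
    then obtain a b where a: "p = - int a - 1" "is_qform n a P" and b: "q = - int b - 1" "is_qform n b Q"
      using grade_E by blast
    have "is_qform n (a + b + 1) (?br P Q)" by (rule W_hom) fact+
    moreover have "p + q = - int (a + b + 1) - 1" using a b by simp
    ultimately show "?br P Q \<in> h_grade n (p + q)"
      unfolding h_grade_def mem_Collect_eq using qform_forms by blast
  next
    fix p q and P Q :: "'p form" assume "P \<in> h_grade n p" "Q \<in> h_grade n q"
    then obtain a b where a: "p = - int a - 1" "is_qform n a P" and b: "q = - int b - 1" "is_qform n b Q"
      using grade_E by blast
    show "?br P Q = form_smul (- super_sign p q) (?br Q P)"
    proof (intro ext)
      fix x K
      have dP: "deg a (P x)" "supp n (P x)" and dQ: "deg b (Q x)" "supp n (Q x)"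
        using a b by (auto simp: is_qform_def ext_hom_iff)
      let ?W = "wedge (wedge (P x) (ext_scale t (\<phi> x))) (Q x) K"
      have sw: "wedge (wedge (Q x) (ext_scale t (\<phi> x))) (P x) K = (-1) ^ ((b + 1) * a) * (-1) ^ b * ?W"
        using fun_cong[OF swap_W[OF dP(1) dQ(1) psi_deg]] by simp
      have FW: "F (int a) (int b) * ?W = F (int b) (int a) * ?W"
      proof (cases "?W = 0")
        case False
        have "deg (a + 1 + b) (wedge (wedge (P x) (ext_scale t (\<phi> x))) (Q x))"
          by (intro wedge_deg dP dQ psi_deg)
        moreover have "supp n (wedge (wedge (P x) (ext_scale t (\<phi> x))) (Q x))"
          by (intro wedge_supp dP dQ psi_supp)
        ultimately have "a + 1 + b \<le> n" using False supp_card by (fastforce simp: deg_def)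
        then have "int a + int b \<le> int n - 1" by linarith
        then show ?thesis using F_sym by simp
      qed simp
      have "form_smul (- super_sign p q) (?br Q P) x K =
          - ((-1) ^ ((a + 1) * (b + 1)) * (F (int b) (int a) * ((-1) ^ ((b + 1) * a) * (-1) ^ b * ?W)))"
        unfolding form_smul_def br_hom[OF b(2) a(2)] a(1) b(1) super_sign_eq sw by simp
      also have "\<dots> = - ((-1) ^ ((a + 1) * (b + 1)) * ((-1) ^ ((b + 1) * a) * (-1) ^ b)) * (F (int b) (int a) * ?W)"
        by (simp add: algebra_simps)
      also have "\<dots> = F (int a) (int b) * ?W" unfolding sign_arith FW by simp
      finally show "?br P Q x K = form_smul (- super_sign p q) (?br Q P) x K"
        unfolding br_hom[OF a(2) b(2)] by simp
    qed
  next
    fix p q r and P Q R :: "'p form" assume "P \<in> h_grade n p" "Q \<in> h_grade n q" "R \<in> h_grade n r"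
    then obtain a b c where a: "is_qform n a P" and b: "is_qform n b Q" and c: "is_qform n c R"
      using grade_E by blast
    have dP: "deg a (P x)" and dQ: "deg b (Q x)" for x
      using a b by (auto simp: is_qform_def ext_hom_iff)
    have z1: "?br P (?br Q R) = (\<lambda>x K. 0)"
      unfolding br_hom[OF a W_hom[OF b c]] unfolding br_hom[OF b c]
      by (simp add: wedge_scale_right jac0[OF dQ psi_deg])
    have z2: "?br Q (?br P R) = (\<lambda>x K. 0)"
      unfolding br_hom[OF b W_hom[OF a c]] unfolding br_hom[OF a c]
      by (simp add: wedge_scale_right jac0[OF dP psi_deg])
    have z3: "?br (?br P Q) R = (\<lambda>x K. 0)"
      unfolding br_hom[OF W_hom[OF a b] c] unfolding br_hom[OF a b]
      by (simp add: wedge_scale_left jac1[OF dQ psi_deg])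
    show "?br P (?br Q R) = form_add (?br (?br P Q) R) (form_smul (super_sign p q) (?br Q (?br P R)))"
      unfolding z1 z2 z3 by (simp add: form_add_def form_smul_def)
  qed
qed

end
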